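(* For every prime power $q$ and every integer $m$ with $1\leq m\leq q-1$, $$\sum_{i=0}^{m}\binom{q}{i}\sum_{d=i}^{m}\sum_{k=0}^{d-i}(-1)^k\binom{q-i}{k}q^{d-i-k}=\frac{q^{m+1}-1}{q-1}.$$ *)

theory Defs
  imports Complex_Main "HOL-Computational_Algebra.Primes"
begin

definition prime_power :: "nat \<Rightarrow> bool" where
  "prime_power q \<longleftrightarrow> (\<exists>p e. prime p \<and> e \<ge> 1 \<and> q = p ^ e)"

end

theory Submission
  imports Defs
begin

lemma swap_tri:
  fixes h :: "nat \<Rightarrow> nat \<Rightarrow> real"
  shows "(\<Sum>i=0..m. \<Sum>d=i..m. h i d) = (\<Sum>d=0..m. \<Sum>i=0..d. h i d)"
proof (induction m)
  case 0 then show ?case by simp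
next
  case (Suc m)
  have "(\<Sum>i=0..Suc m. \<Sum>d=i..Suc m. h i d)
      = (\<Sum>i=0..m. \<Sum>d=i..Suc m. h i d) + h (Suc m) (Suc m)" by simp
  also have "(\<Sum>i=0..m. \<Sum>d=i..Suc m. h i d) = (\<Sum>i=0..m. (\<Sum>d=i..m. h i d) + h i (Suc m))"
    by (rule sum.cong) auto
  also have "\<dots> = (\<Sum>i=0..m. \<Sum>d=i..m. h i d) + (\<Sum>i=0..m. h i (Suc m))"
    by (simp add: sum.distrib)
  also have "(\<Sum>i=0..m. \<Sum>d=i..m. h i d) = (\<Sum>d=0..m. \<Sum>i=0..d. h i d)" by (rule Suc.IH)
  finally have L: "(\<Sum>i=0..Suc m. \<Sum>d=i..Suc m. h i d) = (\<Sum>d=0..m. \<Sum>i=0..d. h i d) + (\<Sum>i=0..m. h i (Suc m)) + h (Suc m) (Suc m)" .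
  have R: "(\<Sum>d=0..Suc m. \<Sum>i=0..d. h i d) = (\<Sum>d=0..m. \<Sum>i=0..d. h i d) + ((\<Sum>i=0..m. h i (Suc m)) + h (Suc m) (Suc m))"
    by (simp only: sum.atLeast0_atMost_Suc)
  show ?case unfolding L R by (simp only: add.assoc)
qed

lemma inner_eq:
  fixes q d :: nat
  shows "(\<Sum>i=0..d. real (q choose i) *
            (\<Sum>k=0..d-i. (-1::real) ^ k * real ((q - i) choose k) * real q ^ (d - i - k)))
         = real q ^ d"
proof -
  define g where "g i k = real (q choose i) * ((-1::real) ^ k * real ((q - i) choose k) * real q ^ (d - i - k))" for i k
  have "(\<Sum>i=0..d. real (q choose i) *
            (\<Sum>k=0..d-i. (-1::real) ^ k * real ((q - i) choose k) * real q ^ (d - i - k)))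
      = (\<Sum>i\<in>{..d}. \<Sum>k\<in>{..d-i}. g i k)"
    by (simp add: g_def sum_distrib_left atLeast0AtMost)
  also have "\<dots> = (\<Sum>(i,k)\<in>{(i,k). i+k \<le> d}. g i k)"
    apply (subst sum.Sigma) apply simp apply simp
    apply (rule sum.cong) apply auto done
  also have "\<dots> = (\<Sum>j\<le>d. \<Sum>i\<le>j. g i (j - i))"
    by (rule sum.triangle_reindex_eq)
  also have "\<dots> = (\<Sum>j\<le>d. real q ^ (d - j) * real (q choose j) * (-1)^j * (\<Sum>i\<le>j. (-1)^i * real (j choose i)))"
  proof (rule sum.cong[OF refl])
    fix j assume j: "j \<in> {..d}"
    have "g i (j - i) = real q ^ (d - j) * real (q choose j) * (-1)^j * ((-1)^i * real (j choose i))"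
      if i: "i \<le> j" for i
    proof -
      have c: "(q choose i) * ((q - i) choose (j - i)) = (q choose j) * (j choose i)"
      proof (cases "j \<le> q")
        case True then show ?thesis using choose_mult[OF i True] by simp
      next
        case False
        then have "(q choose j) = 0" by simp
        moreover have "(q choose i) * ((q - i) choose (j - i)) = 0"
          using False i by (cases "i \<le> q") auto
        ultimately show ?thesis by (metis mult_0)
      qed
      have s: "(-1::real)^(j-i) = (-1)^j * (-1)^i"
      proof -
        have j: "(-1::real)^j = (-1)^(j-i) * (-1)^i" using i by (simp flip: power_add)
        have e: "(-1::real)^i * (-1)^i = 1" by (simp flip: power_mult_distrib)
        show ?thesis unfolding j by (simp add: mult.assoc e)
      qed
      have dd: "d - i - (j - i) = d - j" using i by simp
      have "g i (j - i) = real ((q choose i) * ((q - i) choose (j - i))) * (-1::real)^(j-i) * real q ^ (d - j)"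
        unfolding g_def dd by (simp add: algebra_simps)
      also have "\<dots> = real q ^ (d - j) * real (q choose j) * (-1)^j * ((-1)^i * real (j choose i))"
        unfolding c s by (simp add: algebra_simps)
      finally show ?thesis .
    qed
    then show "(\<Sum>i\<le>j. g i (j - i)) = real q ^ (d - j) * real (q choose j) * (-1)^j * (\<Sum>i\<le>j. (-1)^i * real (j choose i))"
      by (simp add: sum_distrib_left)
  qed
  also have "\<dots> = (\<Sum>j\<le>d. if j = 0 then real q ^ d else 0)"
  proof (rule sum.cong[OF refl])
    fix j assume "j \<in> {..d}"
    show "real q ^ (d - j) * real (q choose j) * (-1)^j * (\<Sum>i\<le>j. (-1)^i * real (j choose i))
        = (if j = 0 then real q ^ d else 0)"
      using choose_alternating_sum[of j, where 'a=real] by auto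
  qed
  also have "\<dots> = real q ^ d" by simp
  finally show ?thesis .
qed

theorem mainTheorem2:
  fixes q m :: nat
  assumes "prime_power q" and "1 \<le> m" and "m \<le> q - 1"
  shows "(\<Sum>i=0..m. real (q choose i) *
            (\<Sum>d=i..m. \<Sum>k=0..d-i. (-1::real) ^ k * real ((q - i) choose k) * real q ^ (d - i - k)))
         = (real q ^ (m + 1) - 1) / (real q - 1)"
proof -
  have q2: "q \<ge> 2"
  proof -
    obtain p e where p: "prime p" "e \<ge> 1" "q = p ^ e"
      using assms(1) unfolding prime_power_def by blast
    have "p ^ 1 \<le> p ^ e" using p(2) prime_ge_1_nat[OF p(1)] by (rule power_increasing)
    then show ?thesis using prime_ge_2_nat[OF p(1)] p(3) by simp
  qed
  have "(\<Sum>i=0..m. real (q choose i) *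
            (\<Sum>d=i..m. \<Sum>k=0..d-i. (-1::real) ^ k * real ((q - i) choose k) * real q ^ (d - i - k)))
      = (\<Sum>i=0..m. \<Sum>d=i..m. real (q choose i) * (\<Sum>k=0..d-i. (-1::real) ^ k * real ((q - i) choose k) * real q ^ (d - i - k)))"
    by (simp add: sum_distrib_left)
  also have "\<dots> = (\<Sum>d=0..m. \<Sum>i=0..d. real (q choose i) * (\<Sum>k=0..d-i. (-1::real) ^ k * real ((q - i) choose k) * real q ^ (d - i - k)))"
    by (rule swap_tri)
  also have "\<dots> = (\<Sum>d=0..m. real q ^ d)"
    using inner_eq by simp
  also have "\<dots> = (real q ^ (m + 1) - 1) / (real q - 1)"
  proof -
    have "real q \<noteq> 1" using q2 by simp
    then show ?thesis using geometric_sum[of "real q" "m+1"]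
      by (simp add: atLeast0AtMost lessThan_Suc_atMost)
  qed
  finally show ?thesis .
qed

end
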